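(* Let $n\geq 4$ and let $S$ be any meet-semilattice of order $n$ having a greatest element. Then \[ \sum_{s\in S}|\mathrm{cov}_1(s)|\leq\sum_{s\in F_n}|\mathrm{cov}_1(s)|, \] where $F_n=\{0,a_1,\ldots,a_{n-2},1\}$ is the meet-semilattice of order $n$ with least element $0$, greatest element $1$, and $a_1,\ldots,a_{n-2}$ pairwise incomparable.
   Context: The meet is written as multiplication. For a semilattice $S$ and $s\in S$, $\mathrm{cov}_1(s)$ denotes the set of equations $xa=xa'$ ($a,a'\in S$; formally ordered pairs $(a,a')$) satisfied by $s$, i.e. with $sa=sa'$; thus $|\mathrm{cov}_1(s)|=|\{(a,a')\in S\times S\mid sa=sa'\}|$. *)

theory Defs
  imports Main
begin

definition meet_semilattice :: "'a set \<Rightarrow> ('a \<Rightarrow> 'a \<Rightarrow> 'a) \<Rightarrow> bool" where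
  "meet_semilattice S m \<longleftrightarrow>
     (\<forall>x\<in>S. \<forall>y\<in>S. m x y \<in> S) \<and>
     (\<forall>x\<in>S. m x x = x) \<and>
     (\<forall>x\<in>S. \<forall>y\<in>S. m x y = m y x) \<and>
     (\<forall>x\<in>S. \<forall>y\<in>S. \<forall>z\<in>S. m (m x y) z = m x (m y z))"

text \<open>Greatest element of the semilattice (w.r.t. the order x \<le> y iff m x y = x).\<close>
definition has_greatest :: "'a set \<Rightarrow> ('a \<Rightarrow> 'a \<Rightarrow> 'a) \<Rightarrow> bool" where
  "has_greatest S m \<longleftrightarrow> (\<exists>t\<in>S. \<forall>x\<in>S. m x t = x)"

text \<open>cov_1(s): the set of equations x a = x a' (pairs (a,a')) satisfied by s.\<close>
definition cov1 :: "'a set \<Rightarrow> ('a \<Rightarrow> 'a \<Rightarrow> 'a) \<Rightarrow> 'a \<Rightarrow> ('a \<times> 'a) set" where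
  "cov1 S m s = {(a, a'). a \<in> S \<and> a' \<in> S \<and> m s a = m s a'}"

text \<open>The semilattice F_n on carrier {0..<n}: 0 is the least element, n-1 the greatest,
  and 1,...,n-2 are pairwise incomparable atoms.\<close>
definition Fn_carrier :: "nat \<Rightarrow> nat set" where
  "Fn_carrier n = {0..<n}"

definition Fn_meet :: "nat \<Rightarrow> nat \<Rightarrow> nat \<Rightarrow> nat" where
  "Fn_meet n x y = (if x = y then x else if x = n - 1 then y else if y = n - 1 then x else 0)"

end

theory Submission
  imports Defs
begin

lemma fibre_pairs:
  assumes "finite A"
  shows "card {(a,b). a\<in>A \<and> b\<in>A \<and> f a = f b} = (\<Sum>v\<in>f`A. card {a\<in>A. f a = v}^2)"
proof -
  have e: "{(a,b). a\<in>A \<and> b\<in>A \<and> f a = f b} = (\<Union>v\<in>f`A. {a\<in>A. f a = v} \<times> {a\<in>A. f a = v})" by auto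
  have "card (\<Union>v\<in>f`A. {a\<in>A. f a = v} \<times> {a\<in>A. f a = v}) = (\<Sum>v\<in>f`A. card ({a\<in>A. f a = v} \<times> {a\<in>A. f a = v}))"
    by (rule card_UN_disjoint) (use assms in auto)
  then show ?thesis unfolding e by (simp add: card_cartesian_product power2_eq_square)
qed

lemma fibre_sum:
  assumes "finite A"
  shows "card A = (\<Sum>v\<in>f`A. card {a\<in>A. f a = v})"
proof -
  have e: "A = (\<Union>v\<in>f`A. {a\<in>A. f a = v})" by auto
  have "card (\<Union>v\<in>f`A. {a\<in>A. f a = v}) = (\<Sum>v\<in>f`A. card {a\<in>A. f a = v})"
    by (rule card_UN_disjoint) (use assms in auto)
  then show ?thesis using e by simp
qed

lemma sum_ge_card:
  assumes "finite I" "\<forall>i\<in>I. k i \<ge> (1::nat)"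
  shows "card I \<le> sum k I"
  using assms by (induction I rule: finite_induct) auto

lemma sq_bound:
  assumes "finite I" "\<forall>i\<in>I. k i \<ge> (1::nat)"
  shows "int (\<Sum>i\<in>I. (k i)^2) \<le> (int (sum k I) - int (card I) + 1)^2 + int (card I) - 1"
  using assms
proof (induction I rule: finite_induct)
  case empty
  then show ?case by simp
next
  case (insert j I)
  have X0': "card I \<le> sum k I" using sum_ge_card[of I k] insert by simp
  have X: "int (card I) \<le> int (sum k I)" using X0' of_nat_le_iff by blast
  have y: "k j \<ge> 1" using insert by simp
  have IH: "int (\<Sum>i\<in>I. (k i)^2) \<le> (int (sum k I) - int (card I) + 1)^2 + int (card I) - 1"
    using insert by simp
  define X where "X = int (sum k I) - int (card I)"
  define Y where "Y = int (k j) - 1"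
  have X0: "X \<ge> 0" using X X_def by simp
  have Y0: "Y \<ge> 0" using y Y_def by simp
  have "0 \<le> X * Y" using X0 Y0 by simp
  have kj: "int (k j) = Y + 1" using Y_def by simp
  have "int (\<Sum>i\<in>insert j I. (k i)^2) = int ((k j)^2) + int (\<Sum>i\<in>I. (k i)^2)" using insert by simp
  also have "\<dots> \<le> (Y+1)^2 + (X + 1)^2 + int (card I) - 1" using IH kj X_def by simp
  also have "\<dots> \<le> (X + Y + 1)^2 + int (card I)" using \<open>0 \<le> X * Y\<close> by (simp add: power2_eq_square algebra_simps)
  also have "\<dots> = (int (sum k (insert j I)) - int (card (insert j I)) + 1)^2 + int (card (insert j I)) - 1"
  proof -
    have a: "int (sum k (insert j I)) - int (card (insert j I)) + 1 = X + Y + 1"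
      using insert X_def Y_def by simp
    have b: "int (card (insert j I)) = int (card I) + 1" using insert by simp
    show ?thesis unfolding a unfolding b by linarith
  qed
  finally show ?case .
qed



lemma Fn_lower:
  assumes n: "n \<ge> 4"
  shows "int n^2 + int n + (int n - 2) * (4 + (int n - 2)^2)
     \<le> int (\<Sum>s\<in>Fn_carrier n. card (cov1 (Fn_carrier n) (Fn_meet n) s))"
proof -
  define F where "F = {0..<n}"
  define c where "c s = card (cov1 F (Fn_meet n) s)" for s
  have finF: "finite F" unfolding F_def by simp
  have cardF: "card F = n" unfolding F_def by simp
  have fincov: "finite (cov1 F (Fn_meet n) s)" for s
    by (rule finite_subset[of _ "F \<times> F"]) (auto simp: cov1_def finF)
  have c0: "c 0 = n^2"
  proof -
    have "cov1 F (Fn_meet n) 0 = F \<times> F" using n by (auto simp: cov1_def Fn_meet_def)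
    then show ?thesis unfolding c_def by (simp add: card_cartesian_product cardF power2_eq_square)
  qed
  have c1: "c (n-1) \<ge> n"
  proof -
    have "(\<lambda>a. (a,a)) ` F \<subseteq> cov1 F (Fn_meet n) (n-1)" by (auto simp: cov1_def)
    moreover have "card ((\<lambda>a. (a,a)) ` F) = n" using cardF by (simp add: card_image inj_on_def)
    ultimately show ?thesis unfolding c_def by (metis card_mono fincov)
  qed
  have ci: "c i \<ge> 4 + (n-2)^2" if i: "i \<in> {1..<n-1}" for i
  proof -
    define A where "A = {i, n-1}"
    define C where "C = F - A"
    have AF: "A \<subseteq> F" using i unfolding A_def F_def by auto
    have cA: "card A = 2" using i unfolding A_def by auto
    have cC: "card C = n - 2" unfolding C_def using AF cA cardF finF by (metis card_Diff_subset finite_subset)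
    have sub: "(A \<times> A) \<union> (C \<times> C) \<subseteq> cov1 F (Fn_meet n) i"
      using i AF unfolding cov1_def A_def C_def Fn_meet_def F_def by auto
    have "card ((A \<times> A) \<union> (C \<times> C)) = 4 + (n-2)^2"
      apply (subst card_Un_disjoint)
      using finF AF cA cC unfolding C_def
      by (auto simp: card_cartesian_product power2_eq_square intro: finite_subset)
    then show ?thesis unfolding c_def using sub fincov by (metis card_mono)
  qed
  have Fsplit: "F = insert 0 (insert (n-1) {1..<n-1})" using n unfolding F_def by auto
  have "(\<Sum>s\<in>F. c s) = c 0 + c (n-1) + (\<Sum>s\<in>{1..<n-1}. c s)"
    using n by (subst Fsplit) simp
  moreover have "(\<Sum>s\<in>{1..<n-1}. c s) \<ge> (n-2) * (4 + (n-2)^2)"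
  proof -
    have "(\<Sum>s\<in>{1..<n-1}. c s) \<ge> (\<Sum>s\<in>{1..<n-1}. 4 + (n-2)^2)" by (rule sum_mono) (use ci in auto)
    moreover have "card {1..<n-1} = n - 2" by simp
    moreover have "(\<Sum>s\<in>{1..<n-1}. (4::nat) + (n-2)^2) = of_nat (card {1..<n-1}) * (4 + (n-2)^2)" by (rule sum_constant)
    ultimately show ?thesis by (simp only: of_nat_id)
  qed
  ultimately have "(\<Sum>s\<in>F. c s) \<ge> n^2 + n + (n-2) * (4 + (n-2)^2)" using c0 c1 by linarith
  then have "int (\<Sum>s\<in>F. c s) \<ge> int (n^2 + n + (n-2) * (4 + (n-2)^2))" by linarith
  moreover have "int (n^2 + n + (n-2) * (4 + (n-2)^2)) = int n^2 + int n + (int n - 2) * (4 + (int n - 2)^2)"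
    using n by (simp add: of_nat_diff)
  ultimately show ?thesis unfolding c_def F_def Fn_carrier_def by linarith
qed


lemma card_filter_sum: "finite S \<Longrightarrow> card {x\<in>S. P x} = (\<Sum>x\<in>S. if P x then 1 else (0::nat))"
proof -
  assume "finite S"
  have "{x\<in>S. P x} = S \<inter> Collect P" by auto
  then show ?thesis using \<open>finite S\<close> by (simp add: sum.If_cases)
qed

lemma main_bound:
  fixes S :: "'a set" and m :: "'a \<Rightarrow> 'a \<Rightarrow> 'a" and n :: nat
  assumes n: "n \<ge> 4"
    and fin: "finite S" and cardS: "card S = n"
    and ms: "meet_semilattice S m"
    and hg: "has_greatest S m"
  shows "int (\<Sum>s\<in>S. card (cov1 S m s)) \<le> int n^2 + int n + (int n - 2) * (4 + (int n - 2)^2)"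
proof -
  have cl: "\<And>x y. x\<in>S \<Longrightarrow> y\<in>S \<Longrightarrow> m x y \<in> S" using ms unfolding meet_semilattice_def by blast
  have idm: "\<And>x. x\<in>S \<Longrightarrow> m x x = x" using ms unfolding meet_semilattice_def by blast
  have cm: "\<And>x y. x\<in>S \<Longrightarrow> y\<in>S \<Longrightarrow> m x y = m y x" using ms unfolding meet_semilattice_def by blast
  have as: "\<And>x y z. x\<in>S \<Longrightarrow> y\<in>S \<Longrightarrow> z\<in>S \<Longrightarrow> m (m x y) z = m x (m y z)" using ms unfolding meet_semilattice_def by blast
  obtain T where T: "T \<in> S" "\<And>x. x\<in>S \<Longrightarrow> m x T = x" using hg unfolding has_greatest_def by blast
  define U where "U s = {x\<in>S. m s x = s}" for s
  define D where "D s = {x\<in>S. m s x = x}" for s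
  have finU: "finite (U s)" for s unfolding U_def using fin by simp
  have finD: "finite (D s)" for s unfolding D_def using fin by simp
  have img: "m s ` S = D s" if s: "s \<in> S" for s
  proof
    show "m s ` S \<subseteq> D s"
    proof
      fix w assume "w \<in> m s ` S"
      then obtain y where y: "y \<in> S" "w = m s y" by blast
      have "m s (m s y) = m s y" using as[of s s y] idm[of s] s y by simp
      then show "w \<in> D s" using y cl s unfolding D_def by auto
    qed
    show "D s \<subseteq> m s ` S"
    proof
      fix x assume "x \<in> D s"
      then have "x \<in> S" "x = m s x" unfolding D_def by auto
      then show "x \<in> m s ` S" by (rule rev_image_eqI)
    qed
  qed
  have Sne: "S \<noteq> {}" using n cardS by auto
  then obtain z0 where "z0 \<in> S" by blast
  obtain B where B1: "B \<in> S" and Bmin: "\<And>y. y \<in> S \<Longrightarrow> card (D B) \<le> card (D y)"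
    using ex_has_least_nat[of "\<lambda>x. x \<in> S" z0 "\<lambda>x. card (D x)"] \<open>z0 \<in> S\<close> by blast
  have B2: "m B y = B" if y: "y \<in> S" for y
  proof (rule ccontr)
    assume ne: "m B y \<noteq> B"
    define w where "w = m B y"
    have wS: "w \<in> S" using cl B1 y w_def by simp
    have sub: "D w \<subseteq> D B"
    proof
      fix x assume "x \<in> D w"
      then have x: "x \<in> S" "m w x = x" unfolding D_def by auto
      have "m B w = w" unfolding w_def using as[of B B y] idm[of B] B1 y by simp
      then have "m B x = x" using as[of B w x] x B1 wS by simp
      then show "x \<in> D B" using x unfolding D_def by simp
    qed
    have mBw: "m B w = w" unfolding w_def using as[of B B y] idm[of B] B1 y by simp
    have "B \<notin> D w"
    proof
      assume "B \<in> D w"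
      then have "m w B = B" unfolding D_def by simp
      then have "w = B" using mBw cm[of w B] wS B1 by simp
      then show False using ne w_def by simp
    qed
    moreover have "B \<in> D B" using idm B1 unfolding D_def by simp
    ultimately have "D w \<subset> D B" using sub by blast
    then have "card (D w) < card (D B)" using finD psubset_card_mono by blast
    then show False using Bmin[OF wS] by simp
  qed
  define N where "N = int n"
  define cU where "cU s = int (card (U s))" for s
  define cD where "cD s = int (card (D s))" for s
  have cbound: "int (card (cov1 S m s)) \<le> cU s ^2 + (N + 2 - cU s - cD s)^2 + cD s - 2" if s: "s \<in> S" for s
  proof -
    define k where "k v = card {a\<in>S. m s a = v}" for v
    have sD: "s \<in> D s" using s idm unfolding D_def by simp
    have c: "card (cov1 S m s) = (\<Sum>v\<in>D s. k v ^2)"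
      unfolding cov1_def k_def using fibre_pairs[OF fin, of "m s"] img[OF s] by simp
    have ks: "k s = card (U s)" unfolding k_def U_def by simp
    have sk: "(\<Sum>v\<in>D s. k v) = n"
      unfolding k_def using fibre_sum[OF fin, of "m s"] img[OF s] cardS by simp
    have c2: "(\<Sum>v\<in>D s. k v ^2) = k s ^2 + (\<Sum>v\<in>D s - {s}. k v ^2)"
      using sum.remove[OF finD sD] by simp
    have sk2: "n = k s + (\<Sum>v\<in>D s - {s}. k v)"
      using sum.remove[OF finD sD, of k] sk by simp
    have cd: "int (card (D s - {s})) = cD s - 1" unfolding cD_def using sD finD
    proof -
      have "card (D s) \<ge> 1" using sD finD by (metis One_nat_def Suc_leI card_gt_0_iff empty_iff)
      then show "int (card (D s - {s})) = int (card (D s)) - 1" using sD finD by (simp add: card_Diff_singleton of_nat_diff)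
    qed
    have k1: "\<forall>v\<in>D s - {s}. k v \<ge> 1"
    proof
      fix v assume "v \<in> D s - {s}"
      then have "v \<in> {a\<in>S. m s a = v}" unfolding D_def by auto
      moreover have "finite {a\<in>S. m s a = v}" using fin by simp
      ultimately have "card {a\<in>S. m s a = v} > 0" using card_gt_0_iff by blast
      then show "k v \<ge> 1" unfolding k_def by simp
    qed
    have sq: "int (\<Sum>v\<in>D s - {s}. k v ^2) \<le> (int (\<Sum>v\<in>D s - {s}. k v) - int (card (D s - {s})) + 1)^2 + int (card (D s - {s})) - 1"
      using sq_bound[OF _ k1] finD by simp
    have e1: "int (\<Sum>v\<in>D s - {s}. k v) = N - cU s" unfolding N_def cU_def using sk2 ks by simp
    have "int (card (cov1 S m s)) = cU s ^ 2 + int (\<Sum>v\<in>D s - {s}. k v ^2)"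
      unfolding c c2 cU_def ks by simp
    also have "\<dots> \<le> cU s ^2 + ((N - cU s) - (cD s - 1) + 1)^2 + (cD s - 1) - 1"
      using sq unfolding e1 cd by simp
    finally show ?thesis by (simp add: algebra_simps)
  qed
  have sumUD: "(\<Sum>s\<in>S. cU s) = (\<Sum>s\<in>S. cD s)"
  proof -
    have "(\<Sum>s\<in>S. card (U s)) = (\<Sum>s\<in>S. \<Sum>x\<in>S. if m s x = s then 1 else (0::nat))"
      unfolding U_def using card_filter_sum[OF fin] by simp
    moreover have "(\<Sum>s\<in>S. card (D s)) = (\<Sum>s\<in>S. \<Sum>x\<in>S. if m s x = x then 1 else (0::nat))"
      unfolding D_def using card_filter_sum[OF fin] by simp
    moreover have "(\<Sum>s\<in>S. \<Sum>x\<in>S. if m s x = x then 1 else (0::nat)) = (\<Sum>x\<in>S. \<Sum>s\<in>S. if m s x = x then 1 else (0::nat))"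
      by (rule sum.swap)
    moreover have "(\<Sum>x\<in>S. \<Sum>s\<in>S. if m s x = x then 1 else (0::nat)) = (\<Sum>x\<in>S. \<Sum>s\<in>S. if m x s = x then 1 else (0::nat))"
      by (rule sum.cong[OF refl], rule sum.cong[OF refl]) (simp add: cm)
    ultimately have "(\<Sum>s\<in>S. card (U s)) = (\<Sum>s\<in>S. card (D s))" by simp
    then show ?thesis unfolding cU_def cD_def by (metis of_nat_sum)
  qed
  have UT: "U T = {T}" unfolding U_def using T cm by auto
  have DT: "D T = S" unfolding D_def using T cm by auto
  have UB: "U B = S" unfolding U_def using B1 B2 by auto
  have DB: "D B = {B}" unfolding D_def using B1 B2 by auto
  have TB: "T \<noteq> B" using UT UB n cardS by auto
  define M where "M = S - {T, B}"
  have finM: "finite M" unfolding M_def using fin by simp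
  have cardM: "card M = n - 2" unfolding M_def using T B1 TB cardS fin by (simp add: card_Diff_subset)
  have Ssplit: "S = insert T (insert B M)" unfolding M_def using T B1 by auto
  have TM: "T \<notin> insert B M" "B \<notin> M" unfolding M_def using TB by auto
  have sum_split: "(\<Sum>s\<in>S. f s) = f T + f B + (\<Sum>s\<in>M. f s)" for f :: "'a \<Rightarrow> int"
  proof -
    have "(\<Sum>s\<in>insert T (insert B M). f s) = f T + (\<Sum>s\<in>insert B M. f s)"
      by (rule sum.insert) (use finM TM(1) in auto)
    also have "(\<Sum>s\<in>insert B M. f s) = f B + (\<Sum>s\<in>M. f s)" using TM(2) finM by simp
    finally show ?thesis using Ssplit by simp
  qed
  have Mfacts: "cU s \<ge> 2 \<and> cD s \<ge> 2 \<and> cU s + cD s \<le> N + 1" if s: "s \<in> M" for s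
  proof -
    have sS: "s \<in> S" "s \<noteq> T" "s \<noteq> B" using s unfolding M_def by auto
    have "{s, T} \<subseteq> U s" unfolding U_def using sS T idm by auto
    then have "card {s, T} \<le> card (U s)" using finU card_mono by blast
    then have u2: "cU s \<ge> 2" unfolding cU_def using sS by simp
    have "m s B = B" using cm[of s B] B2[of s] sS B1 by simp
    then have "{s, B} \<subseteq> D s" unfolding D_def using sS B1 idm by auto
    then have "card {s, B} \<le> card (D s)" using finD card_mono by blast
    then have d2: "cD s \<ge> 2" unfolding cD_def using sS by simp
    have "U s \<inter> D s \<subseteq> {s}" unfolding U_def D_def by auto
    then have "card (U s \<inter> D s) \<le> card {s}" by (intro card_mono) auto
    then have i1: "card (U s \<inter> D s) \<le> 1" by simp
    have "U s \<union> D s \<subseteq> S" unfolding U_def D_def by auto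
    then have i2: "card (U s \<union> D s) \<le> n" using fin cardS card_mono by blast
    have "card (U s) + card (D s) = card (U s \<union> D s) + card (U s \<inter> D s)"
      using card_Un_Int[OF finU finD] by simp
    then have "card (U s) + card (D s) \<le> n + 1" using i1 i2 by linarith
    then have "cU s + cD s \<le> N + 1" unfolding cU_def cD_def N_def by linarith
    then show ?thesis using u2 d2 by simp
  qed
  define b where "b s = cU s ^2 + (N + 2 - cU s - cD s)^2 + cD s - 2" for s
  have bM: "b s \<le> 4 + (N-2)^2 + 2*(cU s - 2) - (N-2)*(cD s - 2)" if s: "s \<in> M" for s
  proof -
    define e where "e = cU s - 2"
    define f where "f = cD s - 2"
    have e0: "e \<ge> 0" and f0: "f \<ge> 0" and ef: "e + f \<le> N - 3" using Mfacts[OF s] unfolding e_def f_def by auto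
    have h1: "e * e \<le> (N-3) * e" using e0 ef f0 by (intro mult_right_mono) auto
    have h2: "(e+f) * (e+f) \<le> (N-3) * (e+f)" using e0 ef f0 by (intro mult_right_mono) auto
    have "b s = (e+2)^2 + (N - 2 - (e+f))^2 + f" unfolding b_def e_def f_def by (simp add: algebra_simps)
    also have "\<dots> \<le> 4 + (N-2)^2 + 2*e - (N-2)*f"
      using h1 h2 by (simp add: power2_eq_square algebra_simps)
    finally show ?thesis unfolding e_def f_def .
  qed
  have N4: "N \<ge> 4" unfolding N_def using n by simp
  have bT: "b T = N" unfolding b_def cU_def cD_def UT DT N_def using cardS by (simp add: power2_eq_square)
  have bB: "b B = N^2" unfolding b_def cU_def cD_def UB DB N_def using cardS by (simp add: power2_eq_square)
  have sM: "(\<Sum>s\<in>M. cU s) = (\<Sum>s\<in>M. cD s)"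
    using sumUD sum_split[of cU] sum_split[of cD] unfolding cU_def cD_def UT DT UB DB N_def
    using cardS by simp
  have dM: "(\<Sum>s\<in>M. cD s) \<ge> 2 * (N - 2)"
  proof -
    have "(\<Sum>s\<in>M. cD s) \<ge> (\<Sum>s\<in>M. 2)" using Mfacts by (intro sum_mono) auto
    moreover have "(\<Sum>s\<in>M. (2::int)) = 2 * (N - 2)" using cardM n unfolding N_def by (simp add: of_nat_diff)
    ultimately show ?thesis by simp
  qed
  have "(\<Sum>s\<in>M. b s) \<le> (\<Sum>s\<in>M. 4 + (N-2)^2 + 2*(cU s - 2) - (N-2)*(cD s - 2))"
    using bM by (rule sum_mono)
  also have "\<dots> = (N-2)*(4 + (N-2)^2) + 2*(\<Sum>s\<in>M. cU s) - 4*(N-2) - (N-2)*(\<Sum>s\<in>M. cD s) + 2*(N-2)*(N-2)"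
  proof -
    define K where "K = 4 + (N-2)^2 - 4 + 2*(N-2)"
    have "(\<Sum>s\<in>M. 4 + (N-2)^2 + 2*(cU s - 2) - (N-2)*(cD s - 2)) = (\<Sum>s\<in>M. K + (2*cU s - (N-2)*cD s))"
      unfolding K_def by (rule sum.cong) (simp_all add: algebra_simps)
    also have "\<dots> = of_nat (card M) * K + (2*(\<Sum>s\<in>M. cU s) - (N-2)*(\<Sum>s\<in>M. cD s))"
      by (simp add: sum.distrib sum_subtractf sum_distrib_left)
    also have "of_nat (card M) = N - 2" using cardM n unfolding N_def by (simp add: of_nat_diff)
    finally show ?thesis unfolding K_def by (simp add: algebra_simps)
  qed
  also have "\<dots> = (N-2)*(4 + (N-2)^2) + (4 - N) * ((\<Sum>s\<in>M. cD s) - 2*(N-2))"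
    using sM by (simp add: algebra_simps)
  also have "\<dots> \<le> (N-2)*(4 + (N-2)^2)"
  proof -
    have "(4 - N) * ((\<Sum>s\<in>M. cD s) - 2*(N-2)) \<le> 0" using N4 dM by (intro mult_nonpos_nonneg) auto
    then show ?thesis by simp
  qed
  finally have bMsum: "(\<Sum>s\<in>M. b s) \<le> (N-2)*(4 + (N-2)^2)" .
  have "int (\<Sum>s\<in>S. card (cov1 S m s)) = (\<Sum>s\<in>S. int (card (cov1 S m s)))" by simp
  also have "\<dots> \<le> (\<Sum>s\<in>S. b s)" unfolding b_def using cbound by (intro sum_mono) auto
  also have "\<dots> = b T + b B + (\<Sum>s\<in>M. b s)" by (rule sum_split)
  also have "\<dots> \<le> N^2 + N + (N-2)*(4 + (N-2)^2)" using bT bB bMsum by simp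
  finally show ?thesis unfolding N_def .
qed

theorem theorem3:
  fixes S :: "'a set" and m :: "'a \<Rightarrow> 'a \<Rightarrow> 'a" and n :: nat
  assumes "n \<ge> 4"
    and "finite S" and "card S = n"
    and "meet_semilattice S m"
    and "has_greatest S m"
  shows "(\<Sum>s\<in>S. card (cov1 S m s))
           \<le> (\<Sum>s\<in>Fn_carrier n. card (cov1 (Fn_carrier n) (Fn_meet n) s))"
proof -
  have "int (\<Sum>s\<in>S. card (cov1 S m s))
           \<le> int (\<Sum>s\<in>Fn_carrier n. card (cov1 (Fn_carrier n) (Fn_meet n) s))"
    using main_bound[OF assms] Fn_lower[OF assms(1)] by linarith
  then show ?thesis by (simp only: of_nat_le_iff)
qed

end
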